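(* Let $R$ be a commutative ring with identity. Then $R$ is semi-complemented if and only if its classical ring of quotients $q(R)$ is semi-complemented.
   Context: $\mathfrak{N}(R)$ is the nilradical and $\mathrm{reg}(R)$ the set of regular elements (non-zero-divisors); $q(R)$ is the localization of $R$ at $\mathrm{reg}(R)$. An element $a$ is complemented if there is $b$ with $ab=0$ and $a+b\in\mathrm{reg}(R)$. $R$ is semi-complemented if every element of $R\setminus\mathfrak{N}(R)$ is complemented. *)

theory Defs
  imports "HOL-Algebra.Algebra"
begin

definition nilradical :: "('a, 'b) ring_scheme \<Rightarrow> 'a set" where
  "nilradical R = {a \<in> carrier R. \<exists>n::nat. a [^]\<^bsub>R\<^esub> n = \<zero>\<^bsub>R\<^esub>}"

definition regular :: "('a, 'b) ring_scheme \<Rightarrow> 'a set" where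
  "regular R = {a \<in> carrier R. \<forall>b \<in> carrier R. a \<otimes>\<^bsub>R\<^esub> b = \<zero>\<^bsub>R\<^esub> \<longrightarrow> b = \<zero>\<^bsub>R\<^esub>}"

definition complemented :: "('a, 'b) ring_scheme \<Rightarrow> 'a \<Rightarrow> bool" where
  "complemented R a \<longleftrightarrow>
     (\<exists>b \<in> carrier R. a \<otimes>\<^bsub>R\<^esub> b = \<zero>\<^bsub>R\<^esub> \<and> a \<oplus>\<^bsub>R\<^esub> b \<in> regular R)"

definition semi_complemented :: "('a, 'b) ring_scheme \<Rightarrow> bool" where
  "semi_complemented R \<longleftrightarrow> (\<forall>a \<in> carrier R - nilradical R. complemented R a)"

text \<open>Classical ring of quotients q(R) = localization of R at regular R:
  pairs (a, s) with s regular, modulo (a,s) ~ (b,t) iff u(at - bs) = 0 for some regular u.\<close>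
definition frac_rel :: "('a, 'b) ring_scheme \<Rightarrow> (('a \<times> 'a) \<times> ('a \<times> 'a)) set" where
  "frac_rel R = {((a, s), (b, t)). (a, s) \<in> carrier R \<times> regular R \<and> (b, t) \<in> carrier R \<times> regular R \<and>
      (\<exists>u \<in> regular R. u \<otimes>\<^bsub>R\<^esub> ((a \<otimes>\<^bsub>R\<^esub> t) \<ominus>\<^bsub>R\<^esub> (b \<otimes>\<^bsub>R\<^esub> s)) = \<zero>\<^bsub>R\<^esub>)}"

definition frac :: "('a, 'b) ring_scheme \<Rightarrow> 'a \<Rightarrow> 'a \<Rightarrow> ('a \<times> 'a) set" where
  "frac R a s = frac_rel R `` {(a, s)}"

definition q_mult :: "('a, 'b) ring_scheme \<Rightarrow> ('a \<times> 'a) set \<Rightarrow> ('a \<times> 'a) set \<Rightarrow> ('a \<times> 'a) set" where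
  "q_mult R P Q = \<Union>{frac R (a \<otimes>\<^bsub>R\<^esub> b) (s \<otimes>\<^bsub>R\<^esub> t) | a s b t. (a, s) \<in> P \<and> (b, t) \<in> Q}"

definition q_add :: "('a, 'b) ring_scheme \<Rightarrow> ('a \<times> 'a) set \<Rightarrow> ('a \<times> 'a) set \<Rightarrow> ('a \<times> 'a) set" where
  "q_add R P Q = \<Union>{frac R ((a \<otimes>\<^bsub>R\<^esub> t) \<oplus>\<^bsub>R\<^esub> (b \<otimes>\<^bsub>R\<^esub> s)) (s \<otimes>\<^bsub>R\<^esub> t) | a s b t. (a, s) \<in> P \<and> (b, t) \<in> Q}"

definition q_ring :: "('a, 'b) ring_scheme \<Rightarrow> ('a \<times> 'a) set ring" where
  "q_ring R = \<lparr> carrier = (carrier R \<times> regular R) // frac_rel R,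
     monoid.mult = q_mult R, one = frac R \<one>\<^bsub>R\<^esub> \<one>\<^bsub>R\<^esub>,
     ring.zero = frac R \<zero>\<^bsub>R\<^esub> \<one>\<^bsub>R\<^esub>, ring.add = q_add R \<rparr>"

end

theory Submission
  imports Defs
begin

context cring
begin

lemma reg_carrier: "s \<in> regular R \<Longrightarrow> s \<in> carrier R"
  by (simp add: regular_def)

lemma reg_cancel: "s \<in> regular R \<Longrightarrow> x \<in> carrier R \<Longrightarrow> s \<otimes> x = \<zero> \<Longrightarrow> x = \<zero>"
  by (simp add: regular_def)

lemma reg_one: "\<one> \<in> regular R"
  by (simp add: regular_def)

lemma reg_mult: "s \<in> regular R \<Longrightarrow> t \<in> regular R \<Longrightarrow> s \<otimes> t \<in> regular R"
proof -
  assume a: "s \<in> regular R" "t \<in> regular R"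
  have c: "s \<in> carrier R" "t \<in> carrier R" using a reg_carrier by auto
  show ?thesis unfolding regular_def
  proof (intro CollectI conjI ballI impI)
    show "s \<otimes> t \<in> carrier R" using c by simp
    fix b assume b: "b \<in> carrier R" "s \<otimes> t \<otimes> b = \<zero>"
    hence "s \<otimes> (t \<otimes> b) = \<zero>" using c by (simp add: m_assoc)
    hence "t \<otimes> b = \<zero>" using reg_cancel[OF a(1)] c b by simp
    thus "b = \<zero>" using reg_cancel[OF a(2)] c b by simp
  qed
qed

lemma reg_pow: "s \<in> regular R \<Longrightarrow> s [^] (n::nat) \<in> regular R"
  by (induct n) (simp_all add: reg_one reg_mult)

lemma eq_from_minus: "x \<in> carrier R \<Longrightarrow> y \<in> carrier R \<Longrightarrow> x \<ominus> y = \<zero> \<Longrightarrow> x = y"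
proof -
  assume a: "x \<in> carrier R" "y \<in> carrier R" "x \<ominus> y = \<zero>"
  have "x = (x \<ominus> y) \<oplus> y" using a(1,2) by algebra
  also have "\<dots> = \<zero> \<oplus> y" by (simp only: a(3))
  also have "\<dots> = y" using a by simp
  finally show ?thesis .
qed

lemma reg_cancel_eq: "s \<in> regular R \<Longrightarrow> x \<in> carrier R \<Longrightarrow> y \<in> carrier R \<Longrightarrow> s \<otimes> x = s \<otimes> y \<Longrightarrow> x = y"
proof -
  assume a: "s \<in> regular R" "x \<in> carrier R" "y \<in> carrier R" "s \<otimes> x = s \<otimes> y"
  have sc: "s \<in> carrier R" using a(1) reg_carrier by blast
  have "s \<otimes> (x \<ominus> y) = s \<otimes> x \<ominus> s \<otimes> y" using a sc by algebra
  also have "\<dots> = \<zero>" using a sc by algebra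
  finally have "x \<ominus> y = \<zero>" using reg_cancel[OF a(1)] a by blast
  thus ?thesis using eq_from_minus a by blast
qed

lemma rel_iff:
  assumes "a \<in> carrier R" "s \<in> regular R" "b \<in> carrier R" "t \<in> regular R"
  shows "((a,s),(b,t)) \<in> frac_rel R \<longleftrightarrow> a \<otimes> t = b \<otimes> s"
proof
  have sc: "s \<in> carrier R" "t \<in> carrier R" using assms reg_carrier by auto
  assume "((a,s),(b,t)) \<in> frac_rel R"
  then obtain u where u: "u \<in> regular R" "u \<otimes> (a \<otimes> t \<ominus> b \<otimes> s) = \<zero>"
    unfolding frac_rel_def by auto
  hence "a \<otimes> t \<ominus> b \<otimes> s = \<zero>" using reg_cancel[OF u(1)] assms sc by simp
  thus "a \<otimes> t = b \<otimes> s" using eq_from_minus[of "a \<otimes> t" "b \<otimes> s"] assms sc by simp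
next
  have sc: "s \<in> carrier R" "t \<in> carrier R" using assms reg_carrier by auto
  assume "a \<otimes> t = b \<otimes> s"
  hence "\<one> \<otimes> (a \<otimes> t \<ominus> b \<otimes> s) = \<one> \<otimes> (b \<otimes> s \<ominus> b \<otimes> s)" by (simp only:)
  also have "\<dots> = \<zero>" using assms sc by algebra
  finally have "\<one> \<otimes> (a \<otimes> t \<ominus> b \<otimes> s) = \<zero>" .
  thus "((a,s),(b,t)) \<in> frac_rel R" unfolding frac_rel_def using assms reg_one by blast
qed

lemma rel_dom: "((a,s),(b,t)) \<in> frac_rel R \<Longrightarrow> a \<in> carrier R \<and> s \<in> regular R \<and> b \<in> carrier R \<and> t \<in> regular R"
  unfolding frac_rel_def by auto

lemma frac_equiv: "equiv (carrier R \<times> regular R) (frac_rel R)"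
proof (rule equivI)
  show "frac_rel R \<subseteq> (carrier R \<times> regular R) \<times> (carrier R \<times> regular R)"
    unfolding frac_rel_def by auto
  show "refl_on (carrier R \<times> regular R) (frac_rel R)"
  proof (rule refl_onI)
    fix x assume "x \<in> carrier R \<times> regular R"
    then obtain a s where "x = (a,s)" "a \<in> carrier R" "s \<in> regular R" by auto
    thus "(x,x) \<in> frac_rel R" using rel_iff by simp
  qed
  show "sym (frac_rel R)"
  proof (rule symI)
    fix x y assume h: "(x,y) \<in> frac_rel R"
    obtain a s where xa: "x = (a,s)" by (cases x)
    obtain b t where yb: "y = (b,t)" by (cases y)
    have d: "a \<in> carrier R" "s \<in> regular R" "b \<in> carrier R" "t \<in> regular R"
      using rel_dom[of a s b t] h xa yb by auto
    have "a \<otimes> t = b \<otimes> s" using rel_iff[OF d] h xa yb by simp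
    hence "b \<otimes> s = a \<otimes> t" by simp
    thus "(y,x) \<in> frac_rel R" using rel_iff[OF d(3,4,1,2)] xa yb by simp
  qed
  show "trans (frac_rel R)"
  proof (rule transI)
    fix x y z assume h: "(x,y) \<in> frac_rel R" "(y,z) \<in> frac_rel R"
    obtain a s where xa: "x = (a,s)" by (cases x)
    obtain b t where yb: "y = (b,t)" by (cases y)
    obtain c w where zc: "z = (c,w)" by (cases z)
    have d: "a \<in> carrier R" "s \<in> regular R" "b \<in> carrier R" "t \<in> regular R"
      using rel_dom[of a s b t] h xa yb by auto
    have d2: "c \<in> carrier R" "w \<in> regular R"
      using rel_dom[of b t c w] h zc yb by auto
    have sc: "s \<in> carrier R" "t \<in> carrier R" "w \<in> carrier R" using d d2 reg_carrier by auto
    have e1: "a \<otimes> t = b \<otimes> s" using rel_iff[OF d] h xa yb by simp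
    have e2: "b \<otimes> w = c \<otimes> t" using rel_iff[OF d(3,4) d2] h zc yb by simp
    have "t \<otimes> (a \<otimes> w) = (a \<otimes> t) \<otimes> w" using d(1) sc by algebra
    also have "\<dots> = (b \<otimes> s) \<otimes> w" by (simp only: e1)
    also have "\<dots> = s \<otimes> (b \<otimes> w)" using d(3) sc by algebra
    also have "\<dots> = s \<otimes> (c \<otimes> t)" by (simp only: e2)
    also have "\<dots> = t \<otimes> (c \<otimes> s)" using d2(1) sc by algebra
    finally have "t \<otimes> (a \<otimes> w) = t \<otimes> (c \<otimes> s)" .
    hence "a \<otimes> w = c \<otimes> s" using reg_cancel_eq[OF d(4)] d(1) d2(1) sc by simp
    thus "(x,z) \<in> frac_rel R" using rel_iff[OF d(1,2) d2] xa zc by simp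
  qed
qed


lemma mem_frac: "(b,t) \<in> frac R a s \<longleftrightarrow> ((a,s),(b,t)) \<in> frac_rel R"
  by (simp add: frac_def)

lemma frac_self: "a \<in> carrier R \<Longrightarrow> s \<in> regular R \<Longrightarrow> (a,s) \<in> frac R a s"
  using mem_frac rel_iff by simp

lemma frac_eq:
  assumes "a \<in> carrier R" "s \<in> regular R" "b \<in> carrier R" "t \<in> regular R"
  shows "frac R a s = frac R b t \<longleftrightarrow> a \<otimes> t = b \<otimes> s"
proof -
  have "frac R a s = frac R b t \<longleftrightarrow> ((a,s),(b,t)) \<in> frac_rel R"
    unfolding frac_def using eq_equiv_class_iff[OF frac_equiv, of "(a,s)" "(b,t)"] assms by simp
  thus ?thesis using rel_iff[OF assms] by simp
qed

lemma q_carrier: "carrier (q_ring R) = {frac R a s | a s. a \<in> carrier R \<and> s \<in> regular R}"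
  unfolding q_ring_def quotient_def frac_def by auto

lemma q_mult_eq: "U \<otimes>\<^bsub>q_ring R\<^esub> V = q_mult R U V" by (simp add: q_ring_def)
lemma q_add_eq: "U \<oplus>\<^bsub>q_ring R\<^esub> V = q_add R U V" by (simp add: q_ring_def)
lemma q_zero_eq: "\<zero>\<^bsub>q_ring R\<^esub> = frac R \<zero> \<one>" by (simp add: q_ring_def)
lemma q_one_eq: "\<one>\<^bsub>q_ring R\<^esub> = frac R \<one> \<one>" by (simp add: q_ring_def)

lemma frac_zero:
  assumes "t \<in> regular R" shows "frac R \<zero> t = frac R \<zero> \<one>"
proof -
  have "t \<in> carrier R" using assms reg_carrier by auto
  thus ?thesis using frac_eq[of "\<zero>" t "\<zero>" "\<one>"] assms reg_one by simp
qed

lemma q_mult_frac: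
  assumes d: "a \<in> carrier R" "s \<in> regular R" "b \<in> carrier R" "t \<in> regular R"
  shows "q_mult R (frac R a s) (frac R b t) = frac R (a \<otimes> b) (s \<otimes> t)"
proof -
  have sc: "s \<in> carrier R" "t \<in> carrier R" using d reg_carrier by auto
  have "{frac R (a' \<otimes> b') (s' \<otimes> t') | a' s' b' t'. (a', s') \<in> frac R a s \<and> (b', t') \<in> frac R b t}
        = {frac R (a \<otimes> b) (s \<otimes> t)}"
  proof (intro equalityI subsetI)
    fix W assume "W \<in> {frac R (a' \<otimes> b') (s' \<otimes> t') | a' s' b' t'. (a', s') \<in> frac R a s \<and> (b', t') \<in> frac R b t}"
    then obtain a' s' b' t' where W: "W = frac R (a' \<otimes> b') (s' \<otimes> t')"
      and m: "(a', s') \<in> frac R a s" "(b', t') \<in> frac R b t" by blast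
    have d': "a' \<in> carrier R" "s' \<in> regular R" "b' \<in> carrier R" "t' \<in> regular R"
      using m mem_frac rel_dom by blast+
    have sc': "s' \<in> carrier R" "t' \<in> carrier R" using d' reg_carrier by auto
    have e1: "a \<otimes> s' = a' \<otimes> s" using m(1) mem_frac rel_iff[OF d(1,2) d'(1,2)] by simp
    have e2: "b \<otimes> t' = b' \<otimes> t" using m(2) mem_frac rel_iff[OF d(3,4) d'(3,4)] by simp
    have "(a' \<otimes> b') \<otimes> (s \<otimes> t) = (a' \<otimes> s) \<otimes> (b' \<otimes> t)" using d d' sc sc' by algebra
    also have "\<dots> = (a \<otimes> s') \<otimes> (b \<otimes> t')" by (simp only: e1 e2)
    also have "\<dots> = (a \<otimes> b) \<otimes> (s' \<otimes> t')" using d d' sc sc' by algebra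
    finally have "frac R (a' \<otimes> b') (s' \<otimes> t') = frac R (a \<otimes> b) (s \<otimes> t)"
      using frac_eq[of "a' \<otimes> b'" "s' \<otimes> t'" "a \<otimes> b" "s \<otimes> t"] d d' reg_mult by simp
    thus "W \<in> {frac R (a \<otimes> b) (s \<otimes> t)}" using W by simp
  next
    fix W assume "W \<in> {frac R (a \<otimes> b) (s \<otimes> t)}"
    thus "W \<in> {frac R (a' \<otimes> b') (s' \<otimes> t') | a' s' b' t'. (a', s') \<in> frac R a s \<and> (b', t') \<in> frac R b t}"
      using frac_self[OF d(1,2)] frac_self[OF d(3,4)] by blast
  qed
  thus ?thesis unfolding q_mult_def by simp
qed

lemma q_add_frac:
  assumes d: "a \<in> carrier R" "s \<in> regular R" "b \<in> carrier R" "t \<in> regular R"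
  shows "q_add R (frac R a s) (frac R b t) = frac R (a \<otimes> t \<oplus> b \<otimes> s) (s \<otimes> t)"
proof -
  have sc: "s \<in> carrier R" "t \<in> carrier R" using d reg_carrier by auto
  have "{frac R (a' \<otimes> t' \<oplus> b' \<otimes> s') (s' \<otimes> t') | a' s' b' t'. (a', s') \<in> frac R a s \<and> (b', t') \<in> frac R b t}
        = {frac R (a \<otimes> t \<oplus> b \<otimes> s) (s \<otimes> t)}"
  proof (intro equalityI subsetI)
    fix W assume "W \<in> {frac R (a' \<otimes> t' \<oplus> b' \<otimes> s') (s' \<otimes> t') | a' s' b' t'. (a', s') \<in> frac R a s \<and> (b', t') \<in> frac R b t}"
    then obtain a' s' b' t' where W: "W = frac R (a' \<otimes> t' \<oplus> b' \<otimes> s') (s' \<otimes> t')"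
      and m: "(a', s') \<in> frac R a s" "(b', t') \<in> frac R b t" by blast
    have d': "a' \<in> carrier R" "s' \<in> regular R" "b' \<in> carrier R" "t' \<in> regular R"
      using m mem_frac rel_dom by blast+
    have sc': "s' \<in> carrier R" "t' \<in> carrier R" using d' reg_carrier by auto
    have e1: "a \<otimes> s' = a' \<otimes> s" using m(1) mem_frac rel_iff[OF d(1,2) d'(1,2)] by simp
    have e2: "b \<otimes> t' = b' \<otimes> t" using m(2) mem_frac rel_iff[OF d(3,4) d'(3,4)] by simp
    have "(a' \<otimes> t' \<oplus> b' \<otimes> s') \<otimes> (s \<otimes> t) = (a' \<otimes> s) \<otimes> (t' \<otimes> t) \<oplus> (b' \<otimes> t) \<otimes> (s' \<otimes> s)"
      using d d' sc sc' by algebra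
    also have "\<dots> = (a \<otimes> s') \<otimes> (t' \<otimes> t) \<oplus> (b \<otimes> t') \<otimes> (s' \<otimes> s)" by (simp only: e1 e2)
    also have "\<dots> = (a \<otimes> t \<oplus> b \<otimes> s) \<otimes> (s' \<otimes> t')" using d d' sc sc' by algebra
    finally have "frac R (a' \<otimes> t' \<oplus> b' \<otimes> s') (s' \<otimes> t') = frac R (a \<otimes> t \<oplus> b \<otimes> s) (s \<otimes> t)"
      using frac_eq[of "a' \<otimes> t' \<oplus> b' \<otimes> s'" "s' \<otimes> t'" "a \<otimes> t \<oplus> b \<otimes> s" "s \<otimes> t"] d d' sc sc' reg_mult by simp
    thus "W \<in> {frac R (a \<otimes> t \<oplus> b \<otimes> s) (s \<otimes> t)}" using W by simp
  next
    fix W assume "W \<in> {frac R (a \<otimes> t \<oplus> b \<otimes> s) (s \<otimes> t)}"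
    thus "W \<in> {frac R (a' \<otimes> t' \<oplus> b' \<otimes> s') (s' \<otimes> t') | a' s' b' t'. (a', s') \<in> frac R a s \<and> (b', t') \<in> frac R b t}"
      using frac_self[OF d(1,2)] frac_self[OF d(3,4)] by blast
  qed
  thus ?thesis unfolding q_add_def by simp
qed

lemma q_pow:
  assumes "a \<in> carrier R" "s \<in> regular R"
  shows "frac R a s [^]\<^bsub>q_ring R\<^esub> (n::nat) = frac R (a [^] n) (s [^] n)"
proof (induct n)
  case 0
  then show ?case by (simp add: q_one_eq)
next
  case (Suc n)
  have "frac R a s [^]\<^bsub>q_ring R\<^esub> Suc n = q_mult R (frac R (a [^] n) (s [^] n)) (frac R a s)"
    using Suc by (simp add: q_mult_eq)
  also have "\<dots> = frac R (a [^] n \<otimes> a) (s [^] n \<otimes> s)"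
    using q_mult_frac[of "a [^] n" "s [^] n" a s] assms reg_pow by simp
  finally show ?case by simp
qed

lemma q_nil:
  assumes "a \<in> carrier R" "s \<in> regular R"
  shows "frac R a s \<in> nilradical (q_ring R) \<longleftrightarrow> a \<in> nilradical R"
proof -
  have sc: "s \<in> carrier R" using assms reg_carrier by auto
  have c: "frac R a s \<in> carrier (q_ring R)" using assms q_carrier by blast
  have "\<And>n::nat. frac R (a [^] n) (s [^] n) = frac R \<zero> \<one> \<longleftrightarrow> a [^] n = \<zero>"
    using frac_eq assms reg_pow reg_one sc by simp
  thus ?thesis unfolding nilradical_def using c assms q_pow q_zero_eq by simp
qed

lemma q_reg:
  assumes d: "a \<in> carrier R" "s \<in> regular R"
  shows "frac R a s \<in> regular (q_ring R) \<longleftrightarrow> a \<in> regular R"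
proof
  have sc: "s \<in> carrier R" using assms reg_carrier by auto
  assume h: "frac R a s \<in> regular (q_ring R)"
  show "a \<in> regular R" unfolding regular_def
  proof (intro CollectI conjI ballI impI)
    show "a \<in> carrier R" by fact
    fix b assume b: "b \<in> carrier R" "a \<otimes> b = \<zero>"
    have bc: "frac R b \<one> \<in> carrier (q_ring R)" using b reg_one q_carrier by blast
    have "frac R a s \<otimes>\<^bsub>q_ring R\<^esub> frac R b \<one> = frac R (a \<otimes> b) (s \<otimes> \<one>)"
      using q_mult_eq q_mult_frac d b reg_one by simp
    also have "\<dots> = \<zero>\<^bsub>q_ring R\<^esub>" using b(2) frac_zero reg_mult[OF d(2) reg_one] q_zero_eq by simp
    finally have "frac R b \<one> = \<zero>\<^bsub>q_ring R\<^esub>" using h bc unfolding regular_def by blast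
    hence "frac R b \<one> = frac R \<zero> \<one>" using q_zero_eq by simp
    thus "b = \<zero>" using frac_eq[of b "\<one>" "\<zero>" "\<one>"] b reg_one by simp
  qed
next
  have sc: "s \<in> carrier R" using assms reg_carrier by auto
  assume h: "a \<in> regular R"
  show "frac R a s \<in> regular (q_ring R)" unfolding regular_def
  proof (intro CollectI conjI ballI impI)
    show "frac R a s \<in> carrier (q_ring R)" using d q_carrier by blast
    fix Z assume Z: "Z \<in> carrier (q_ring R)" "frac R a s \<otimes>\<^bsub>q_ring R\<^esub> Z = \<zero>\<^bsub>q_ring R\<^esub>"
    then obtain c t where ct: "Z = frac R c t" "c \<in> carrier R" "t \<in> regular R" using q_carrier by blast
    have tc: "t \<in> carrier R" using ct reg_carrier by auto
    have "frac R (a \<otimes> c) (s \<otimes> t) = frac R \<zero> \<one>"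
      using Z(2) ct q_mult_eq q_mult_frac d q_zero_eq by simp
    hence "a \<otimes> c = \<zero>"
      using frac_eq[of "a \<otimes> c" "s \<otimes> t" "\<zero>" "\<one>"] d ct sc tc reg_mult[OF d(2) ct(3)] reg_one by simp
    hence "c = \<zero>" using reg_cancel[OF h] ct by simp
    thus "Z = \<zero>\<^bsub>q_ring R\<^esub>" using ct frac_zero q_zero_eq by simp
  qed
qed

lemma comp_lemma:
  assumes a: "a \<in> carrier R" "b \<in> carrier R" "t \<in> regular R" "a \<otimes> b = \<zero>"
    and r: "a \<otimes> t \<oplus> b \<in> regular R"
  shows "a \<oplus> b \<in> regular R"
  unfolding regular_def
proof (intro CollectI conjI ballI impI)
  have tc: "t \<in> carrier R" using a reg_carrier by auto
  show "a \<oplus> b \<in> carrier R" using a by simp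
  fix y assume y: "y \<in> carrier R" "(a \<oplus> b) \<otimes> y = \<zero>"
  have "(a \<otimes> a) \<otimes> y = a \<otimes> ((a \<oplus> b) \<otimes> y) \<ominus> (a \<otimes> b) \<otimes> y" using a(1,2) y(1) by algebra
  also have "\<dots> = \<zero>" using a y by simp
  finally have e1: "(a \<otimes> a) \<otimes> y = \<zero>" .
  have "(b \<otimes> b) \<otimes> y = b \<otimes> ((a \<oplus> b) \<otimes> y) \<ominus> (a \<otimes> b) \<otimes> y" using a(1,2) y(1) by algebra
  also have "\<dots> = \<zero>" using a y by simp
  finally have e2: "(b \<otimes> b) \<otimes> y = \<zero>" .
  have "(a \<otimes> t \<oplus> b) \<otimes> ((a \<otimes> t \<oplus> b) \<otimes> y) =
     (t \<otimes> t) \<otimes> ((a \<otimes> a) \<otimes> y) \<oplus> (b \<otimes> b) \<otimes> y \<oplus> (t \<otimes> (a \<otimes> b)) \<otimes> y \<oplus> (t \<otimes> (a \<otimes> b)) \<otimes> y"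
    using a(1,2) y(1) tc by algebra
  also have "\<dots> = \<zero>" using e1 e2 a tc y by simp
  finally have "(a \<otimes> t \<oplus> b) \<otimes> ((a \<otimes> t \<oplus> b) \<otimes> y) = \<zero>" .
  hence "(a \<otimes> t \<oplus> b) \<otimes> y = \<zero>" using reg_cancel[OF r] a tc y by simp
  thus "y = \<zero>" using reg_cancel[OF r] y by simp
qed


lemma dir1:
  assumes SR: "semi_complemented R"
  shows "semi_complemented (q_ring R)"
  unfolding semi_complemented_def
proof
  fix W assume W: "W \<in> carrier (q_ring R) - nilradical (q_ring R)"
  then obtain a s where as: "W = frac R a s" "a \<in> carrier R" "s \<in> regular R" using q_carrier by blast
  have sc: "s \<in> carrier R" using as reg_carrier by auto
  have "a \<notin> nilradical R" using W as q_nil by blast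
  hence "complemented R a" using SR as unfolding semi_complemented_def by blast
  then obtain b where b: "b \<in> carrier R" "a \<otimes> b = \<zero>" "a \<oplus> b \<in> regular R"
    unfolding complemented_def by blast
  have Yc: "frac R b s \<in> carrier (q_ring R)" using b as q_carrier by blast
  have m: "W \<otimes>\<^bsub>q_ring R\<^esub> frac R b s = \<zero>\<^bsub>q_ring R\<^esub>"
    using as b q_mult_eq q_mult_frac q_zero_eq frac_zero reg_mult[OF as(3) as(3)] by simp
  have e: "a \<otimes> s \<oplus> b \<otimes> s = (a \<oplus> b) \<otimes> s" using as(2) b(1) sc by algebra
  have "W \<oplus>\<^bsub>q_ring R\<^esub> frac R b s = frac R ((a \<oplus> b) \<otimes> s) (s \<otimes> s)"
    using as b q_add_eq q_add_frac e by simp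
  moreover have "(a \<oplus> b) \<otimes> s \<in> regular R" using reg_mult b as by blast
  ultimately have "W \<oplus>\<^bsub>q_ring R\<^esub> frac R b s \<in> regular (q_ring R)"
    using q_reg[of "(a \<oplus> b) \<otimes> s" "s \<otimes> s"] reg_mult[OF as(3) as(3)] b as sc by simp
  thus "complemented (q_ring R) W" unfolding complemented_def using Yc m by blast
qed

lemma dir2:
  assumes SQ: "semi_complemented (q_ring R)"
  shows "semi_complemented R"
  unfolding semi_complemented_def
proof
  fix a assume a: "a \<in> carrier R - nilradical R"
  have Xc: "frac R a \<one> \<in> carrier (q_ring R)" using a reg_one q_carrier by blast
  have "frac R a \<one> \<notin> nilradical (q_ring R)" using a reg_one q_nil by blast
  hence "complemented (q_ring R) (frac R a \<one>)" using SQ Xc unfolding semi_complemented_def by blast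
  then obtain V where V: "V \<in> carrier (q_ring R)" "frac R a \<one> \<otimes>\<^bsub>q_ring R\<^esub> V = \<zero>\<^bsub>q_ring R\<^esub>"
    "frac R a \<one> \<oplus>\<^bsub>q_ring R\<^esub> V \<in> regular (q_ring R)"
    unfolding complemented_def by blast
  then obtain b t where bt: "V = frac R b t" "b \<in> carrier R" "t \<in> regular R" using q_carrier by blast
  have tc: "t \<in> carrier R" using bt reg_carrier by auto
  have ac: "a \<in> carrier R" using a by blast
  have "frac R (a \<otimes> b) (\<one> \<otimes> t) = frac R \<zero> \<one>"
    using V(2) bt ac reg_one q_mult_eq q_mult_frac q_zero_eq by simp
  hence ab: "a \<otimes> b = \<zero>"
    using frac_eq[of "a \<otimes> b" "\<one> \<otimes> t" "\<zero>" "\<one>"] ac bt tc reg_one by simp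
  have "frac R (a \<otimes> t \<oplus> b \<otimes> \<one>) (\<one> \<otimes> t) \<in> regular (q_ring R)"
    using V(3) bt ac reg_one q_add_eq q_add_frac by simp
  hence "a \<otimes> t \<oplus> b \<otimes> \<one> \<in> regular R"
    using q_reg[of "a \<otimes> t \<oplus> b \<otimes> \<one>" "\<one> \<otimes> t"] ac bt tc reg_one by simp
  hence "a \<otimes> t \<oplus> b \<in> regular R" using bt by simp
  hence "a \<oplus> b \<in> regular R" using comp_lemma ac bt ab by blast
  thus "complemented R a" unfolding complemented_def using bt ab by blast
qed
end


theorem mainTheorem5:
  fixes R :: "('a, 'b) ring_scheme"
  assumes "cring R"
  shows "semi_complemented R \<longleftrightarrow> semi_complemented (q_ring R)"
  using cring.dir1[OF assms] cring.dir2[OF assms] by blast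

end
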